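(* Let $\boldsymbol X$ be an $n\times d$ data matrix and let $\widehat{\boldsymbol\Sigma}$ be a covariance estimator, i.e. a map assigning to every $n\times d$ data matrix a symmetric positive semidefinite $d\times d$ matrix, satisfying: whenever all rows of a data matrix lie in a lower-dimensional affine subspace of $\mathbb R^d$, the estimate $\widehat{\boldsymbol\Sigma}$ of that data matrix is singular. Then the cellwise implosion breakdown value satisfies $$\varepsilon^-_n(\widehat{\boldsymbol\Sigma},\boldsymbol X)\leqslant \left\lceil\frac{n-1}{d}\right\rceil\Big/n .$$
   Context: For an integer $m\ge0$, $\boldsymbol X^m$ denotes any matrix obtained from $\boldsymbol X$ by replacing at most $m$ cells in each column by arbitrary real values. The cellwise implosion breakdown value is $\varepsilon^-_n(\widehat{\boldsymbol\Sigma},\boldsymbol X)=\min\{\tfrac{m}{n}:\ \inf_{\boldsymbol X^m}\lambda_d(\widehat{\boldsymbol\Sigma}(\boldsymbol X^m))=0\}$, where $\lambda_d$ denotes the smallest eigenvalue and the infimum is over all such corrupted matrices $\boldsymbol X^m$. *)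

theory Defs
  imports "HOL-Analysis.Analysis"
begin

text \<open>Data matrices are n x d real matrices: rows indexed by type 'n, columns by type 'd.
  Row i of X is X $ i.\<close>

definition sym_psd :: "real^'d^'d \<Rightarrow> bool" where
  "sym_psd A \<longleftrightarrow> transpose A = A \<and> (\<forall>v. 0 \<le> v \<bullet> (A *v v))"

definition eigenvalues_mat :: "real^'d^'d \<Rightarrow> real set" where
  "eigenvalues_mat A = {c. \<exists>v. v \<noteq> 0 \<and> A *v v = c *\<^sub>R v}"

definition lambda_min :: "real^'d^'d \<Rightarrow> real" where
  "lambda_min A = Min (eigenvalues_mat A)"

definition cell_corrupt :: "nat \<Rightarrow> real^'d^'n \<Rightarrow> real^'d^'n \<Rightarrow> bool" where
  "cell_corrupt m X Y \<longleftrightarrow> (\<forall>j. card {i. Y $ i $ j \<noteq> X $ i $ j} \<le> m)"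

definition implosion_bdv ::
  "(real^'d^'n \<Rightarrow> real^'d^'d) \<Rightarrow> real^'d^'n \<Rightarrow> real" where
  "implosion_bdv Est X =
     Inf {real m / real CARD('n) | m.
            Inf {lambda_min (Est Y) | Y. cell_corrupt m X Y} = 0}"

definition rows_in_lower_affine :: "real^'d^'n \<Rightarrow> bool" where
  "rows_in_lower_affine X \<longleftrightarrow>
     (\<exists>S. affine S \<and> aff_dim S < int CARD('d) \<and> (\<forall>i. X $ i \<in> S))"

end

theory Submission
  imports Defs
begin


lemma sym_swap:
  fixes A :: "real^'d^'d"
  assumes "transpose A = A"
  shows "x \<bullet> (A *v y) = (A *v x) \<bullet> y"
  by (metis assms dot_lmul_matrix transpose_matrix_vector)

lemma quad_zero:
  fixes a b :: real
  assumes "a \<ge> 0" and "\<And>t. 2 * t * a + t^2 * b \<le> 0"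
  shows "a = 0"
proof (rule ccontr)
  assume "a \<noteq> 0"
  then have ap: "a > 0" using assms(1) by simp
  define s where "s = 1 / (\<bar>b\<bar> + 1)"
  have sp: "s > 0" unfolding s_def by (simp add: add_pos_nonneg)
  have h: "2 * (a * s) * a + (a * s)^2 * b \<le> 0" by (rule assms(2))
  have le: "(a * a * s) * (2 + s * b) \<le> 0" using h by (simp add: power2_eq_square algebra_simps)
  have p2: "2 + s * b > 0"
  proof -
    have "s * \<bar>b\<bar> < 1" unfolding s_def by (simp add: divide_less_eq add_pos_nonneg)
    moreover have "- (s * b) \<le> s * \<bar>b\<bar>" using sp
      by (metis abs_ge_minus_self mult_left_mono less_imp_le mult_minus_right)
    ultimately show ?thesis by linarith
  qed
  have p1: "a * a * s > 0" using ap sp by simp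
  have "(a * a * s) * (2 + s * b) > 0" using p1 p2 by (rule mult_pos_pos)
  then show False using le by linarith
qed

lemma aux_alg:
  fixes l t q r u ww :: real
  assumes "l + 2*t*q + t^2*r \<le> l*(1+2*t*u+t^2*ww)" "q - l*u = ww"
  shows "2*t*ww + t^2*(r - l*ww) \<le> 0"
proof -
  have q: "q = ww + l*u" using assms(2) by simp
  show ?thesis using assms(1) unfolding q by (simp add: algebra_simps)
qed

lemma sym_eig_exists:
  fixes A :: "real^'d^'d"
  assumes sym: "transpose A = A"
  shows "\<exists>v c. v \<noteq> 0 \<and> A *v v = c *\<^sub>R v"
proof -
  define f where "f = (\<lambda>x::real^'d. x \<bullet> (A *v x))"
  have cont: "continuous_on (sphere 0 1) f" unfolding f_def
    by (intro continuous_intros matrix_vector_mult_linear_continuous_on)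
  have ne: "sphere (0::real^'d) 1 \<noteq> {}" by simp
  obtain x0 where x0: "x0 \<in> sphere 0 1" "\<And>y. y \<in> sphere 0 1 \<Longrightarrow> f y \<le> f x0"
    using continuous_attains_sup[OF compact_sphere ne cont] by blast
  define l where "l = f x0"
  have nx0: "norm x0 = 1" using x0(1) by simp
  have x0x0: "x0 \<bullet> x0 = 1" using nx0 by (simp add: dot_square_norm)
  have bound: "z \<bullet> (A *v z) \<le> l * (z \<bullet> z)" for z
  proof (cases "z = 0")
    case True then show ?thesis by simp
  next
    case False
    let ?u = "(1 / norm z) *\<^sub>R z"
    have "?u \<in> sphere 0 1" using False by simp
    then have "f ?u \<le> l" using x0 l_def by simp
    moreover have "f ?u = (z \<bullet> (A *v z)) / (norm z)^2"
      unfolding f_def by (simp add: matrix_vector_mult_scaleR power2_eq_square)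
    ultimately have "(z \<bullet> (A *v z)) / (norm z)^2 \<le> l" by simp
    moreover have "(norm z)^2 > 0" using False by simp
    ultimately have "z \<bullet> (A *v z) \<le> l * (norm z)^2" by (simp add: divide_le_eq)
    then show ?thesis by (simp add: dot_square_norm)
  qed
  define w where "w = A *v x0 - l *\<^sub>R x0"
  have key: "2 * t * (w \<bullet> w) + t^2 * (w \<bullet> (A *v w) - l * (w \<bullet> w)) \<le> 0" for t
  proof -
    have b: "(x0 + t *\<^sub>R w) \<bullet> (A *v (x0 + t *\<^sub>R w)) \<le> l * ((x0 + t *\<^sub>R w) \<bullet> (x0 + t *\<^sub>R w))"
      by (rule bound)
    have s: "x0 \<bullet> (A *v w) = (A *v x0) \<bullet> w" by (rule sym_swap[OF sym])
    have e1: "(x0 + t *\<^sub>R w) \<bullet> (A *v (x0 + t *\<^sub>R w)) =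
       x0 \<bullet> (A *v x0) + 2 * t * ((A *v x0) \<bullet> w) + t^2 * (w \<bullet> (A *v w))"
      using s by (simp add: matrix_vector_right_distrib matrix_vector_mult_scaleR inner_add_left inner_add_right
          inner_commute power2_eq_square algebra_simps)
    have e2: "(x0 + t *\<^sub>R w) \<bullet> (x0 + t *\<^sub>R w) = 1 + 2 * t * (x0 \<bullet> w) + t^2 * (w \<bullet> w)"
      using x0x0 by (simp add: inner_add_left inner_add_right inner_commute power2_eq_square algebra_simps)
    have e3: "(A *v x0) \<bullet> w - l * (x0 \<bullet> w) = w \<bullet> w"
      unfolding w_def by (simp add: inner_diff_left inner_commute)
    have "x0 \<bullet> (A *v x0) = l" unfolding l_def f_def ..
    then show ?thesis using b e3 unfolding e1 e2 by (intro aux_alg) simp_all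
  qed
  have "w \<bullet> w = 0" by (rule quad_zero[OF inner_ge_zero key])
  then have "w = 0" by simp
  then have "A *v x0 = l *\<^sub>R x0" unfolding w_def by simp
  moreover have "x0 \<noteq> 0" using nx0 by auto
  ultimately show ?thesis by blast
qed

lemma sym_eig_finite:
  fixes A :: "real^'d^'d"
  assumes sym: "transpose A = A"
  shows "finite {c. \<exists>v. v \<noteq> 0 \<and> A *v v = c *\<^sub>R v}"
proof -
  let ?E = "{c. \<exists>v. v \<noteq> 0 \<and> A *v v = c *\<^sub>R v}"
  define g where "g = (\<lambda>c. SOME v. v \<noteq> 0 \<and> A *v v = c *\<^sub>R v)"
  have g: "g c \<noteq> 0 \<and> A *v g c = c *\<^sub>R g c" if "c \<in> ?E" for c
  proof -
    have "\<exists>v. v \<noteq> 0 \<and> A *v v = c *\<^sub>R v" using that by simp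
    then show ?thesis unfolding g_def by (rule someI_ex)
  qed
  have inj: "inj_on g ?E"
  proof (rule inj_onI)
    fix c c' assume c: "c \<in> ?E" "c' \<in> ?E" "g c = g c'"
    have h2: "A *v g c = c' *\<^sub>R g c" unfolding c(3) using g[OF c(2)] by (rule conjunct2)
    have h1: "A *v g c = c *\<^sub>R g c" using g[OF c(1)] by (rule conjunct2)
    have "c *\<^sub>R g c = c' *\<^sub>R g c" using h1 h2 by (rule subst)
    then have "(c - c') *\<^sub>R g c = 0" by (simp add: scaleR_diff_left)
    then show "c = c'" using g[OF c(1)] by simp
  qed
  have orth: "pairwise orthogonal (g ` ?E)"
  proof (rule pairwiseI)
    fix x y assume xy: "x \<in> g ` ?E" "y \<in> g ` ?E" "x \<noteq> y"
    then obtain c c' where c: "c \<in> ?E" "c' \<in> ?E" "g c \<noteq> g c'" and xc: "x = g c" "y = g c'" by blast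
    show "orthogonal x y" unfolding xc
    proof -
    have ne: "c \<noteq> c'" using c by auto
    have "c * (g c \<bullet> g c') = (A *v g c) \<bullet> g c'" using g[OF c(1)] by simp
    also have "\<dots> = g c \<bullet> (A *v g c')" by (rule sym_swap[OF sym, symmetric])
    also have "\<dots> = c' * (g c \<bullet> g c')" using g[OF c(2)] by simp
    finally have "(c - c') * (g c \<bullet> g c') = 0" by (simp add: algebra_simps)
    then show "orthogonal (g c) (g c')" using ne by (simp add: orthogonal_def)
    qed
  qed
  have "0 \<notin> g ` ?E" using g by force
  then have "independent (g ` ?E)" using pairwise_orthogonal_independent orth by blast
  then have "finite (g ` ?E)" using independent_bound by blast
  then show ?thesis using finite_imageD inj by blast
qed


lemma psd_lambda_min:
  fixes A :: "real^'d^'d"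
  assumes "sym_psd A"
  shows "0 \<le> lambda_min A"
proof -
  have sym: "transpose A = A" and psd: "\<And>v. 0 \<le> v \<bullet> (A *v v)" using assms unfolding sym_psd_def by auto
  have fin: "finite (eigenvalues_mat A)" unfolding eigenvalues_mat_def by (rule sym_eig_finite[OF sym])
  have ne: "eigenvalues_mat A \<noteq> {}" unfolding eigenvalues_mat_def using sym_eig_exists[OF sym] by blast
  have pos: "0 \<le> c" if "c \<in> eigenvalues_mat A" for c
  proof -
    have "\<exists>v. v \<noteq> 0 \<and> A *v v = c *\<^sub>R v" using that unfolding eigenvalues_mat_def by (rule CollectD)
    then obtain v where v: "v \<noteq> 0" "A *v v = c *\<^sub>R v" by (elim exE conjE)
    have "0 \<le> v \<bullet> (A *v v)" by (rule psd)
    also have "\<dots> = c * (v \<bullet> v)" unfolding v(2) by (rule inner_scaleR_right)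
    finally have "0 \<le> c * (v \<bullet> v)" .
    moreover have "v \<bullet> v > 0" using v(1) by (rule inner_gt_zero_iff[THEN iffD2])
    ultimately show ?thesis by (simp add: zero_le_mult_iff)
  qed
  show ?thesis unfolding lambda_min_def using fin ne pos by simp
qed

lemma singular_lambda_min:
  fixes A :: "real^'d^'d"
  assumes "sym_psd A" "\<not> invertible A"
  shows "lambda_min A = 0"
proof -
  have sym: "transpose A = A" using assms unfolding sym_psd_def by auto
  have fin: "finite (eigenvalues_mat A)" unfolding eigenvalues_mat_def by (rule sym_eig_finite[OF sym])
  obtain v where "A *v v = 0" "v \<noteq> 0"
    using assms(2) unfolding invertible_left_inverse matrix_left_invertible_ker by blast
  then have "0 \<in> eigenvalues_mat A" unfolding eigenvalues_mat_def by auto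
  then have "lambda_min A \<le> 0" unfolding lambda_min_def using fin by simp
  then show ?thesis using psd_lambda_min[OF assms(1)] by simp
qed

lemma assign_exists:
  fixes A :: "'a set" and B :: "'b set"
  assumes "finite A" "finite B" "card A \<le> m * card B"
  shows "\<exists>f. (\<forall>a\<in>A. f a \<in> B) \<and> (\<forall>b\<in>B. card {a\<in>A. f a = b} \<le> m)"
  using assms
proof (induction A rule: finite_induct)
  case empty
  then show ?case by simp
next
  case (insert x F)
  have cF: "card F < m * card B" using insert by simp
  obtain f where f: "\<forall>a\<in>F. f a \<in> B" "\<forall>b\<in>B. card {a\<in>F. f a = b} \<le> m"
    using insert cF by fastforce
  have "\<exists>b\<in>B. card {a\<in>F. f a = b} < m"
  proof (rule ccontr)
    assume "\<not> ?thesis"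
    then have "\<forall>b\<in>B. m \<le> card {a\<in>F. f a = b}" by auto
    then have "(\<Sum>b\<in>B. m) \<le> (\<Sum>b\<in>B. card {a\<in>F. f a = b})" by (intro sum_mono) auto
    also have "\<dots> = (\<Sum>b\<in>B. sum (\<lambda>_. 1) {a\<in>F. f a = b})" by simp
    also have "\<dots> = sum (\<lambda>_. 1) F" using insert f by (intro sum.group) auto
    finally show False using cF by (simp add: mult.commute)
  qed
  then obtain b where b: "b \<in> B" "card {a\<in>F. f a = b} < m" by blast
  define f' where "f' = f(x := b)"
  have "card {a\<in>insert x F. f' a = b'} \<le> m" if "b' \<in> B" for b'
  proof (cases "b' = b")
    case True
    have "{a\<in>insert x F. f' a = b'} = insert x {a\<in>F. f a = b}"
      using True insert(2) unfolding f'_def by auto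
    then show ?thesis using b insert(1) by (simp add: card_insert_if)
  next
    case False
    have "{a\<in>insert x F. f' a = b'} = {a\<in>F. f a = b'}"
      using False insert(2) unfolding f'_def by auto
    then show ?thesis using f that by simp
  qed
  moreover have "\<forall>a\<in>insert x F. f' a \<in> B" using f b unfolding f'_def by auto
  ultimately show ?case by blast
qed

lemma inner_ones: "((\<chi> j. 1)::real^'d) \<bullet> (x::real^'d) = (\<Sum>j\<in>UNIV. x $ j)"
  by (simp add: inner_vec_def)

theorem proposition2:
  fixes Est :: "real^'d^'n \<Rightarrow> real^'d^'d" and X :: "real^'d^'n"
  assumes "\<And>Y. sym_psd (Est Y)"
    and "\<And>Y. rows_in_lower_affine Y \<Longrightarrow> \<not> invertible (Est Y)"
  shows "implosion_bdv Est X
           \<le> real_of_int \<lceil>(real CARD('n) - 1) / real CARD('d)\<rceil> / real CARD('n)"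
proof -
  define n where "n = CARD('n)"
  define d where "d = CARD('d)"
  have n1: "n \<ge> 1" unfolding n_def by (simp add: Suc_leI)
  have d1: "d \<ge> 1" unfolding d_def by (simp add: Suc_leI)
  define k where "k = \<lceil>(real n - 1) / real d\<rceil>"
  have "(real n - 1) / real d \<ge> 0" using n1 d1 by simp
  then have k0: "k \<ge> 0" unfolding k_def by simp
  define m where "m = nat k"
  have mk: "real m = real_of_int k" unfolding m_def using k0 by simp
  have "(real n - 1) / real d \<le> real m" unfolding mk k_def by (rule le_of_int_ceiling)
  then have "real n - 1 \<le> real m * real d" using d1 by (simp add: divide_le_eq)
  moreover have "real (n - 1) = real n - 1" using n1 by (simp add: of_nat_diff)
  moreover have "real (m * d) = real m * real d" by (rule of_nat_mult)
  ultimately have "real (n - 1) \<le> real (m * d)" by linarith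
  then have nm: "n - 1 \<le> m * d" by (simp only: of_nat_le_iff)
  define i0 :: 'n where "i0 = undefined"
  define A where "A = (UNIV :: 'n set) - {i0}"
  have cA: "card A = n - 1" unfolding A_def n_def by (simp add: card_Diff_singleton)
  have "card A \<le> m * card (UNIV :: 'd set)" using cA nm unfolding d_def by simp
  then have "\<exists>f. (\<forall>a\<in>A. f a \<in> (UNIV :: 'd set)) \<and> (\<forall>b\<in>(UNIV :: 'd set). card {a\<in>A. f a = b} \<le> m)"
    by (rule assign_exists[OF finite_subset[OF subset_UNIV finite_class.finite_UNIV] finite_class.finite_UNIV])
  then obtain f :: "'n \<Rightarrow> 'd" where
    f0: "(\<forall>a\<in>A. f a \<in> (UNIV :: 'd set)) \<and> (\<forall>b\<in>(UNIV :: 'd set). card {a\<in>A. f a = b} \<le> m)"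
    by (rule exE)
  have f: "\<forall>b\<in>(UNIV::'d set). card {a\<in>A. f a = b} \<le> m" using f0 by (rule conjunct2)
  define s where "s = (\<lambda>i. \<Sum>j\<in>UNIV. X $ i $ j)"
  define Y where "Y = (\<chi> i j. if j = f i \<and> i \<noteq> i0 then X $ i $ j + (s i0 - s i) else X $ i $ j)"
  have rowsum: "(\<Sum>j\<in>UNIV. Y $ i $ j) = s i0" for i
  proof (cases "i = i0")
    case True
    then show ?thesis unfolding Y_def s_def by simp
  next
    case False
    have "(\<Sum>j\<in>UNIV. Y $ i $ j) = (\<Sum>j\<in>UNIV. X $ i $ j + (if j = f i then s i0 - s i else 0))"
      unfolding Y_def using False by (intro sum.cong) auto
    also have "\<dots> = s i + (s i0 - s i)" unfolding s_def by (simp add: sum.distrib)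
    finally show ?thesis by simp
  qed
  have cc: "cell_corrupt m X Y"
    unfolding cell_corrupt_def
  proof
    fix j
    have "{i. Y $ i $ j \<noteq> X $ i $ j} \<subseteq> {a\<in>A. f a = j}"
      unfolding Y_def A_def by (auto split: if_splits)
    then have "card {i. Y $ i $ j \<noteq> X $ i $ j} \<le> card {a\<in>A. f a = j}" by (intro card_mono) auto
    then show "card {i. Y $ i $ j \<noteq> X $ i $ j} \<le> m" using f by (meson UNIV_I order_trans)
  qed
  have low: "rows_in_lower_affine Y"
    unfolding rows_in_lower_affine_def
  proof (intro exI conjI allI)
    let ?S = "{x::real^'d. (\<chi> j. 1) \<bullet> x = s i0}"
    have nz: "((\<chi> j. 1)::real^'d) \<noteq> 0" by (metis vec_lambda_beta zero_index zero_neq_one)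
    show "affine ?S" by (rule affine_hyperplane)
    show "aff_dim ?S < int CARD('d)" using aff_dim_hyperplane[OF nz, of "s i0"] d1 unfolding d_def by simp
    fix i show "Y $ i \<in> ?S" using rowsum[of i] by (simp add: inner_ones)
  qed
  have l0: "lambda_min (Est Y) = 0" using singular_lambda_min[OF assms(1) assms(2)[OF low]] .
  define T where "T = {lambda_min (Est Y) | Y. cell_corrupt m X Y}"
  have "Inf T = 0"
  proof (rule cInf_eq_minimum)
    show "0 \<in> T" unfolding T_def using cc l0 by (intro CollectI exI[of _ Y]) simp
    show "\<And>x. x \<in> T \<Longrightarrow> 0 \<le> x" unfolding T_def using psd_lambda_min assms(1) by blast
  qed
  then have mem: "real m / real n \<in> {real m / real CARD('n) | m.
            Inf {lambda_min (Est Y) | Y. cell_corrupt m X Y} = 0}" unfolding T_def n_def by blast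
  have "implosion_bdv Est X \<le> real m / real n"
    unfolding implosion_bdv_def
    by (rule cInf_lower[OF mem]) (auto intro!: bdd_belowI[where m=0])
  then show ?thesis unfolding mk k_def n_def d_def .
qed

end
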